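(* Let $n,m\in\mathbb Z$, $k\ge0$, and $a,b,q,p\in\mathbb C$ with $|p|<1$. Then \[ \binom{n+m}{k}_{a,b;q,p}=\sum_{j=0}^k\binom nj_{a,b;q,p}\binom{m}{k-j}_{aq^{2n-j},bq^{n+j};q,p}\prod_{i=1}^{k-j}W_{a,b;q,p}(i+j,n-j). \]
   Context: $\theta(x;p)=\prod_{j\ge0}(1-p^jx)(1-p^{j+1}/x)$, $\theta(x_1,\dots,x_\ell;p)=\prod_i\theta(x_i;p)$; parameters are such that denominators below do not vanish. Product convention: $\prod_{j=l}^mA_j=A_l\cdots A_m$ if $m>l-1$, $1$ if $m=l-1$, $A_{l-1}^{-1}\cdots A_{m+1}^{-1}$ if $m<l-1$. For parameters $(a,b)$: $w_{a,b;q,p}(s,t)=\frac{\theta(aq^{s+2t},bq^{2s+t-2},aq^{t-s-1}/b;p)}{\theta(aq^{s+2t-2},bq^{2s+t},aq^{t-s+1}/b;p)}q$, $W_{a,b;q,p}(s,t)=\prod_{j=1}^tw_{a,b;q,p}(s,j)=\frac{\theta(aq^{s+2t},bq^{2s},bq^{2s-1},aq^{1-s}/b,aq^{-s}/b;p)}{\theta(aq^s,bq^{2s+t},bq^{2s+t-1},aq^{1+t-s}/b,aq^{t-s}/b;p)}q^t$, and $\binom nk_{a,b;q,p}$ ($n,k\in\mathbb Z$) is the unique family with $\binom n0_{a,b;q,p}=\binom nn_{a,b;q,p}=1$ and $\binom{n+1}k_{a,b;q,p}=\binom nk_{a,b;q,p}+\binom n{k-1}_{a,b;q,p}W_{a,b;q,p}(k,n+1-k)$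 for $(n+1,k)\ne(0,0)$ (closed form $\frac{(q^{1+k},aq^{1+k},bq^{1+k},aq^{1-k}/b;q,p)_{n-k}}{(q,aq,bq^{1+2k},aq/b;q,p)_{n-k}}$ with $(x;q,p)_r=\prod_{i=0}^{r-1}\theta(xq^i;p)$). The coefficient $\binom{\cdot}{\cdot}_{aq^{2n-j},bq^{n+j};q,p}$ is this with $(a,b)$ replaced by $(aq^{2n-j},bq^{n+j})$. *)

theory Defs
  imports "HOL-Analysis.Analysis"
begin

definition etheta :: "complex \<Rightarrow> complex \<Rightarrow> complex" where
  "etheta x p = (\<Prod>j. (1 - p ^ j * x) * (1 - p ^ (j + 1) / x))"

definition prodZ :: "int \<Rightarrow> int \<Rightarrow> (int \<Rightarrow> complex) \<Rightarrow> complex" where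
  "prodZ l m A = (if m \<ge> l - 1 then (\<Prod>j\<in>{l..m}. A j)
                  else (\<Prod>j\<in>{m+1..l-1}. inverse (A j)))"

definition wgt :: "complex \<Rightarrow> complex \<Rightarrow> complex \<Rightarrow> complex \<Rightarrow> int \<Rightarrow> int \<Rightarrow> complex" where
  "wgt a b q p s t =
     (etheta (a * q powi (s + 2 * t)) p * etheta (b * q powi (2 * s + t - 2)) p
        * etheta (a * q powi (t - s - 1) / b) p)
   / (etheta (a * q powi (s + 2 * t - 2)) p * etheta (b * q powi (2 * s + t)) p
        * etheta (a * q powi (t - s + 1) / b) p) * q"

definition Wgt :: "complex \<Rightarrow> complex \<Rightarrow> complex \<Rightarrow> complex \<Rightarrow> int \<Rightarrow> int \<Rightarrow> complex" where
  "Wgt a b q p s t = prodZ 1 t (\<lambda>j. wgt a b q p s j)"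

definition ebinom :: "complex \<Rightarrow> complex \<Rightarrow> complex \<Rightarrow> complex \<Rightarrow> int \<Rightarrow> int \<Rightarrow> complex" where
  "ebinom a b q p = (THE f :: int \<Rightarrow> int \<Rightarrow> complex.
      (\<forall>n. f n 0 = 1) \<and> (\<forall>n. f n n = 1) \<and>
      (\<forall>n k. (n + 1, k) \<noteq> (0, 0) \<longrightarrow>
         f (n + 1) k = f n k + f n (k - 1) * Wgt a b q p k (n + 1 - k)))"

end

theory Submission
  imports Defs
begin

lemma prodZ_empty: "prodZ l (l - 1) f = 1"
  by (simp add: prodZ_def)

lemma prodZ_step:
  assumes "f (m + 1) \<noteq> 0"
  shows "prodZ l (m + 1) f = prodZ l m f * f (m + 1)"
proof -
  consider "m \<ge> l - 1" | "m = l - 2" | "m < l - 2" by linarith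
  then show ?thesis
  proof cases
    case 1
    then have "{l..m+1} = insert (m+1) {l..m}" by auto
    then show ?thesis using 1 by (simp add: prodZ_def mult.commute)
  next
    case 2
    then show ?thesis using assms by (simp add: prodZ_def)
  next
    case 3
    then have "{m+1..l-1} = insert (m+1) {m+2..l-1}" by auto
    then have e: "(\<Prod>j\<in>{m+1..l-1}. inverse (f j)) = inverse (f (m+1)) * (\<Prod>j\<in>{m+2..l-1}. inverse (f j))"
      by simp
    have "prodZ l m f = (\<Prod>j\<in>{m+1..l-1}. inverse (f j))" using 3 by (simp add: prodZ_def)
    moreover have "prodZ l (m+1) f = (\<Prod>j\<in>{m+2..l-1}. inverse (f j))"
      using 3 by (simp add: prodZ_def add.commute)
    ultimately show ?thesis using e assms by simp
  qed
qed

lemma prodZ_nonzero: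
  assumes "\<And>j. f j \<noteq> 0" shows "prodZ l m f \<noteq> 0"
  using assms by (simp add: prodZ_def)

lemma int_shift_induct:
  fixes P :: "int \<Rightarrow> bool"
  assumes "P 0" "\<And>x. P x \<Longrightarrow> P (x + 1)" "\<And>x. P (x + 1) \<Longrightarrow> P x"
  shows "P y"
proof -
  have "P (int k)" for k
  proof (induction k)
    case (Suc k) then show ?case using assms(2)[of "int k"] by (simp add: add.commute)
  qed (use assms in auto)
  moreover have "P (- int k)" for k
  proof (induction k)
    case (Suc k)
    have "P (- int k - 1)" using assms(3)[of "- int k - 1"] Suc by simp
    moreover have "- int k - 1 = - int (Suc k)" by simp
    ultimately show ?case by metis
  qed (use assms in auto)
  ultimately show ?thesis by (metis int_cases)
qed

lemma prodZ_split:
  assumes "\<And>j. f j \<noteq> 0"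
  shows "prodZ 1 A f * prodZ 1 B (\<lambda>l. f (l + A)) = prodZ 1 (A + B) f"
proof (induction B rule: int_shift_induct)
  case 1
  then show ?case using prodZ_empty[of 1] by simp
next
  case (2 x)
  then show ?case using prodZ_step[of "\<lambda>l. f (l + A)" x 1] prodZ_step[of f "A + x" 1] assms
    by (simp add: algebra_simps)
next
  case (3 x)
  then show ?case using prodZ_step[of "\<lambda>l. f (l + A)" x 1] prodZ_step[of f "A + x" 1] assms
    by (simp add: algebra_simps)
qed

lemma powi_mult_assoc:
  fixes q a :: complex
  assumes "q \<noteq> 0"
  shows "a * q powi x * q powi y = a * q powi (x + y)"
  using assms by (simp add: power_int_add mult.assoc)

lemma powi_div_assoc:
  fixes q a b :: complex
  assumes "q \<noteq> 0"
  shows "a * q powi x * q powi y / (b * q powi z) = a * q powi (x + y - z) / b"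
  using assms by (simp add: power_int_add power_int_diff field_simps)

lemma wgt_shift:
  fixes q a b :: complex
  assumes "q \<noteq> 0"
  shows "wgt (a * q powi (2 * n - j)) (b * q powi (n + j)) q p s t = wgt a b q p (s + j) (t + n - j)"
proof -
  have e1: "a * q powi (2 * n - j) * q powi (s + 2 * t) = a * q powi (s + j + 2 * (t + n - j))"
    using powi_mult_assoc[OF assms, of a "2 * n - j" "s + 2 * t"] by (simp add: algebra_simps)
  have e2: "b * q powi (n + j) * q powi (2 * s + t - 2) = b * q powi (2 * (s + j) + (t + n - j) - 2)"
    using powi_mult_assoc[OF assms, of b "n + j" "2 * s + t - 2"] by (simp add: algebra_simps)
  have e3: "a * q powi (2 * n - j) * q powi (t - s - 1) / (b * q powi (n + j)) = a * q powi ((t + n - j) - (s + j) - 1) / b"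
    using powi_div_assoc[OF assms, of a "2 * n - j" "t - s - 1" b "n + j"] by (simp add: algebra_simps)
  have e4: "a * q powi (2 * n - j) * q powi (s + 2 * t - 2) = a * q powi (s + j + 2 * (t + n - j) - 2)"
    using powi_mult_assoc[OF assms, of a "2 * n - j" "s + 2 * t - 2"] by (simp add: algebra_simps)
  have e5: "b * q powi (n + j) * q powi (2 * s + t) = b * q powi (2 * (s + j) + (t + n - j))"
    using powi_mult_assoc[OF assms, of b "n + j" "2 * s + t"] by (simp add: algebra_simps)
  have e6: "a * q powi (2 * n - j) * q powi (t - s + 1) / (b * q powi (n + j)) = a * q powi ((t + n - j) - (s + j) + 1) / b"
    using powi_div_assoc[OF assms, of a "2 * n - j" "t - s + 1" b "n + j"] by (simp add: algebra_simps)
  show ?thesis unfolding wgt_def e1 e2 e3 e4 e5 e6 ..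
qed

lemma wgt_nonzero:
  fixes q a b :: complex
  assumes "q \<noteq> 0"
    and "\<And>r::int. etheta (a * q powi r) p \<noteq> 0"
    and "\<And>r::int. etheta (b * q powi r) p \<noteq> 0"
    and "\<And>r::int. etheta (a * q powi r / b) p \<noteq> 0"
  shows "wgt a b q p s t \<noteq> 0"
  using assms unfolding wgt_def by simp

definition espec :: "(int \<Rightarrow> int \<Rightarrow> complex) \<Rightarrow> (int \<Rightarrow> int \<Rightarrow> complex) \<Rightarrow> bool" where
  "espec W f \<longleftrightarrow> (\<forall>n. f n 0 = 1) \<and> (\<forall>n. f n n = 1) \<and>
      (\<forall>n k. (n + 1, k) \<noteq> (0, 0) \<longrightarrow> f (n + 1) k = f n k + f n (k - 1) * W k (n + 1 - k))"

lemma ebinom_espec_def: "ebinom a b q p = (THE f. espec (Wgt a b q p) f)"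
  unfolding ebinom_def espec_def ..

definition sumZ :: "int \<Rightarrow> int \<Rightarrow> (int \<Rightarrow> complex) \<Rightarrow> complex" where
  "sumZ l m A = (if m \<ge> l - 1 then (\<Sum>j\<in>{l..m}. A j) else - (\<Sum>j\<in>{m+1..l-1}. A j))"

lemma sumZ_empty: "sumZ l (l - 1) A = 0"
  by (simp add: sumZ_def)

lemma sumZ_step: "sumZ l (m + 1) A = sumZ l m A + A (m + 1)"
proof -
  consider "m \<ge> l - 1" | "m = l - 2" | "m < l - 2" by linarith
  then show ?thesis
  proof cases
    case 1
    then have "{l..m+1} = insert (m+1) {l..m}" by auto
    then show ?thesis using 1 by (simp add: sumZ_def)
  next
    case 2
    then show ?thesis by (simp add: sumZ_def)
  next
    case 3
    then have "{m+1..l-1} = insert (m+1) {m+2..l-1}" by auto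
    then have e: "(\<Sum>j\<in>{m+1..l-1}. A j) = A (m+1) + (\<Sum>j\<in>{m+2..l-1}. A j)"
      by simp
    have "sumZ l m A = - (\<Sum>j\<in>{m+1..l-1}. A j)" using 3 by (simp add: sumZ_def)
    moreover have "sumZ l (m+1) A = - (\<Sum>j\<in>{m+2..l-1}. A j)"
      using 3 by (simp add: sumZ_def add.commute)
    ultimately show ?thesis using e by simp
  qed
qed

primrec colP :: "(int \<Rightarrow> int \<Rightarrow> complex) \<Rightarrow> nat \<Rightarrow> int \<Rightarrow> complex" where
  "colP W 0 n = 1"
| "colP W (Suc k) n = 1 + sumZ (int k + 1) (n - 1) (\<lambda>i. colP W k i * W (int k + 1) (i - int k))"

primrec colN :: "(int \<Rightarrow> int \<Rightarrow> complex) \<Rightarrow> nat \<Rightarrow> int \<Rightarrow> complex" where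
  "colN W 0 n = (if n = -1 then 1 else 0)"
| "colN W (Suc k) n = (colN W k (n + 1) - colN W k n) / W (- (int k + 1)) (n + int k + 2)"

definition FF :: "(int \<Rightarrow> int \<Rightarrow> complex) \<Rightarrow> int \<Rightarrow> int \<Rightarrow> complex" where
  "FF W n k = (if k \<ge> 0 then colP W (nat k) n else colN W (nat (- k - 1)) n)"

lemma colP_rec: "colP W (Suc k) (n + 1) = colP W (Suc k) n + colP W k n * W (int k + 1) (n - int k)"
  using sumZ_step[of "int k + 1" "n - 1" "\<lambda>i. colP W k i * W (int k + 1) (i - int k)"] by simp

lemma colP_diag: "colP W (Suc k) (int k + 1) = 1"
  using sumZ_empty[of "int k + 1"] by simp

lemma colN_facts:
  assumes "\<And>s. W s 0 = 1"
  shows "colN W k (- (int k + 1)) = 1 \<and> (\<forall>n < - (int k + 1). colN W k n = 0)"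
proof (induction k)
  case 0 then show ?case by simp
next
  case (Suc k)
  have e: "- (int (Suc k) + 1) + 1 = - (int k + 1)" by simp
  have e2: "- (int (Suc k) + 1) + int k + 2 = 0" by simp
  have "colN W (Suc k) (- (int (Suc k) + 1)) = (colN W k (- (int k + 1)) - colN W k (- (int (Suc k) + 1))) / W (- (int k + 1)) 0"
    unfolding colN.simps e e2 ..
  also have "\<dots> = 1" using Suc assms by simp
  finally have "colN W (Suc k) (- (int (Suc k) + 1)) = 1" .
  moreover have "\<forall>n < - (int (Suc k) + 1). colN W (Suc k) n = 0"
    using Suc by simp
  ultimately show ?case by blast
qed

lemma FF_espec:
  assumes W0: "\<And>s. W s 0 = 1" and Wnz: "\<And>s t. W s t \<noteq> 0"
  shows "espec W (FF W)"
  unfolding espec_def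
proof (intro conjI allI impI)
  fix n show "FF W n 0 = 1" by (simp add: FF_def)
next
  fix n
  show "FF W n n = 1"
  proof (cases "n \<ge> 0")
    case True
    show ?thesis
    proof (cases "n = 0")
      case True then show ?thesis by (simp add: FF_def)
    next
      case False
      define c where "c = nat n - 1"
      have c: "nat n = Suc c" "n = int c + 1" using True False c_def by auto
      then show ?thesis using True colP_diag[of W c] by (simp add: FF_def)
    qed
  next
    case False
    define c where "c = nat (- n - 1)"
    have c: "nat (- n - 1) = c" "n = - (int c + 1)" using False c_def by auto
    then show ?thesis using False colN_facts[where W=W and k=c, OF W0] by (simp add: FF_def)
  qed
next
  fix n k :: int
  assume nk: "(n + 1, k) \<noteq> (0, 0)"
  consider "k \<ge> 1" | "k = 0" | "k < 0" by linarith
  then show "FF W (n + 1) k = FF W n k + FF W n (k - 1) * W k (n + 1 - k)"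
  proof cases
    case 1
    define c where "c = nat (k - 1)"
    have c: "k = int c + 1" using 1 c_def by auto
    then have "nat k = Suc c" "nat (k - 1) = c" by auto
    then show ?thesis using c colP_rec[of W c n] by (simp add: FF_def)
  next
    case 2
    then have "n \<noteq> -1" using nk by auto
    then show ?thesis using 2 by (simp add: FF_def)
  next
    case 3
    define c where "c = nat (- k - 1)"
    have kc: "k = - (int c + 1)" using 3 c_def by simp
    have "nat (- (k - 1) - 1) = Suc c" using 3 c_def by simp
    then have "FF W n (k - 1) = colN W (Suc c) n"
      using 3 unfolding FF_def by simp
    also have "\<dots> = (colN W c (n + 1) - colN W c n) / W (- (int c + 1)) (n + int c + 2)" by simp
    also have "- (int c + 1) = k" using kc by simp
    also have "n + int c + 2 = n + 1 - k" using kc by simp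
    finally have "FF W n (k - 1) = (colN W c (n + 1) - colN W c n) / W k (n + 1 - k)" .
    moreover have "FF W (n + 1) k = colN W c (n + 1)" "FF W n k = colN W c n"
      using 3 c_def by (simp_all add: FF_def)
    ultimately show ?thesis using Wnz[of k "n + 1 - k"] by simp
  qed
qed

lemma const_shift:
  fixes d :: "int \<Rightarrow> complex"
  assumes "\<And>n. d (n + 1) = d n"
  shows "d n = d 0"
  by (induction n rule: int_shift_induct) (use assms in auto)

lemma espec_unique:
  assumes Wnz: "\<And>s t. W s t \<noteq> 0" and f: "espec W f" and g: "espec W g"
  shows "f = g"
proof -
  have pos: "\<forall>n. f n (int c) = g n (int c)" for c
  proof (induction c)
    case 0 then show ?case using f g by (simp add: espec_def)
  next
    case (Suc c)
    define d where "d n = f n (int c + 1) - g n (int c + 1)" for n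
    have "d (n + 1) = d n" for n
    proof -
      have "(n + 1, int c + 1) \<noteq> (0, 0)" by simp
      then have "f (n + 1) (int c + 1) = f n (int c + 1) + f n (int c) * W (int c + 1) (n + 1 - (int c + 1))"
        "g (n + 1) (int c + 1) = g n (int c + 1) + g n (int c) * W (int c + 1) (n + 1 - (int c + 1))"
        using f g unfolding espec_def by (metis add_diff_cancel_right')+
      then show ?thesis using Suc unfolding d_def by simp
    qed
    then have "d n = d (int c + 1)" for n using const_shift[of d] by metis
    moreover have "d (int c + 1) = 0" using f g unfolding d_def espec_def by simp
    ultimately have "\<forall>n. f n (int c + 1) = g n (int c + 1)" unfolding d_def by simp
    moreover have "int (Suc c) = int c + 1" by simp
    ultimately show ?case by metis
  qed
  have neg: "\<forall>n. f n (- int c) = g n (- int c)" for c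
  proof (induction c)
    case 0 then show ?case using f g by (simp add: espec_def)
  next
    case (Suc c)
    show ?case
    proof
      fix n
      show "f n (- int (Suc c)) = g n (- int (Suc c))"
      proof (cases "(n + 1, - int c) = (0, 0)")
        case True
        then have "n = - int (Suc c)" by simp
        then show ?thesis using f g unfolding espec_def by simp
      next
        case False
        then have "f (n + 1) (- int c) = f n (- int c) + f n (- int c - 1) * W (- int c) (n + 1 - (- int c))"
          "g (n + 1) (- int c) = g n (- int c) + g n (- int c - 1) * W (- int c) (n + 1 - (- int c))"
          using f g unfolding espec_def by blast+
        moreover have "f (n + 1) (- int c) = g (n + 1) (- int c)" "f n (- int c) = g n (- int c)"
          using Suc by blast+
        ultimately have "f n (- int c - 1) * W (- int c) (n + 1 - (- int c)) = g n (- int c - 1) * W (- int c) (n + 1 - (- int c))"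
          by (metis add_left_cancel)
        then have "f n (- int c - 1) = g n (- int c - 1)" by (metis Wnz mult_right_cancel)
        moreover have "- int c - 1 = - int (Suc c)" by simp
        ultimately show ?thesis by metis
      qed
    qed
  qed
  show ?thesis
  proof (intro ext)
    fix n k
    show "f n k = g n k"
    proof (cases "k \<ge> 0")
      case True then show ?thesis using pos[of "nat k"] by simp
    next
      case False then show ?thesis using neg[of "nat (- k)"] by simp
    qed
  qed
qed

lemma Wgt_zero: "Wgt a b q p s 0 = 1"
  unfolding Wgt_def using prodZ_empty[of 1] by simp

lemma ebinom_espec:
  assumes "\<And>s t. Wgt a b q p s t \<noteq> 0"
  shows "espec (Wgt a b q p) (ebinom a b q p)"
proof -
  have ex: "espec (Wgt a b q p) (FF (Wgt a b q p))"
    by (rule FF_espec) (use assms Wgt_zero in auto)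
  have "\<exists>!f. espec (Wgt a b q p) f"
    using ex espec_unique[of "Wgt a b q p", OF assms] by blast
  then show ?thesis unfolding ebinom_espec_def by (rule theI')
qed

lemma espec_rec:
  "espec W f \<Longrightarrow> (n + 1, k) \<noteq> (0, 0) \<Longrightarrow> f (n + 1) k = f n k + f n (k - 1) * W k (n + 1 - k)"
  unfolding espec_def by blast

lemma espec_col0: "espec W f \<Longrightarrow> f n 0 = 1"
  unfolding espec_def by blast

lemma espec_diag: "espec W f \<Longrightarrow> f n n = 1"
  unfolding espec_def by blast

lemma espec_zero_above:
  assumes f: "espec W f" and W0: "\<And>s. W s 0 = 1"
  shows "\<forall>n. 0 \<le> n \<and> n < int K \<longrightarrow> f n (int K) = 0"
proof (induction K)
  case 0 then show ?case by auto
next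
  case (Suc K)
  have inner: "d < Suc K \<longrightarrow> f (int K - int d) (int K + 1) = 0" for d
  proof (induction d)
    case 0
    have "f (int K + 1) (int K + 1) = f (int K) (int K + 1) + f (int K) (int K + 1 - 1) * W (int K + 1) (int K + 1 - (int K + 1))"
      using espec_rec[OF f, of "int K" "int K + 1"] by simp
    then show ?case using espec_diag[OF f] W0 by simp
  next
    case (Suc d)
    show ?case
    proof
      assume d: "Suc d < Suc K"
      define n where "n = int K - int (Suc d)"
      have n1: "n + 1 = int K - int d" unfolding n_def by simp
      have "f (n + 1) (int K + 1) = f n (int K + 1) + f n (int K + 1 - 1) * W (int K + 1) (n + 1 - (int K + 1))"
        using espec_rec[OF f, of n "int K + 1"] by simp
      moreover have "f (n + 1) (int K + 1) = 0" using Suc d n1 by simp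
      moreover have "f n (int K) = 0" using Suc.IH d unfolding n_def
        using \<open>\<forall>n. 0 \<le> n \<and> n < int K \<longrightarrow> f n (int K) = 0\<close> by simp
      ultimately show "f (int K - int (Suc d)) (int K + 1) = 0" unfolding n_def by simp
    qed
  qed
  show ?case
  proof (intro allI impI)
    fix n assume n: "0 \<le> n \<and> n < int (Suc K)"
    define d where "d = nat (int K - n)"
    have "d < Suc K" "n = int K - int d" using n d_def by auto
    then show "f n (int (Suc K)) = 0" using inner[of d] by (simp add: add.commute)
  qed
qed

theorem corollary4:
  fixes n m :: int and k :: nat and a b q p :: complex
  assumes "norm p < 1"
    and "a \<noteq> 0" and "b \<noteq> 0" and "q \<noteq> 0"
    and "\<And>r::int. etheta (a * q powi r) p \<noteq> 0"
    and "\<And>r::int. etheta (b * q powi r) p \<noteq> 0"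
    and "\<And>r::int. etheta (a * q powi r / b) p \<noteq> 0"
    and "\<And>r::int. r \<noteq> 0 \<Longrightarrow> etheta (q powi r) p \<noteq> 0"
  shows "ebinom a b q p (n + m) (int k) =
    (\<Sum>j=0..k. ebinom a b q p n (int j)
       * ebinom (a * q powi (2 * n - int j)) (b * q powi (n + int j)) q p m (int (k - j))
       * (\<Prod>i=1..k-j. Wgt a b q p (int i + int j) (n - int j)))"
proof -
  note q0 = assms(4)
  have wnz: "wgt a b q p s t \<noteq> 0" for s t
    by (rule wgt_nonzero) (use assms in auto)
  have Wnz: "Wgt a b q p s t \<noteq> 0" for s t
    unfolding Wgt_def by (rule prodZ_nonzero) (rule wnz)
  define A where "A j = a * q powi (2 * n - int j)" for j :: nat
  define B where "B j = b * q powi (n + int j)" for j :: nat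
  have wsh: "wgt (A j) (B j) q p s t = wgt a b q p (s + int j) (t + n - int j)" for j s t
    unfolding A_def B_def by (rule wgt_shift[OF q0])
  have Wsh: "Wgt (A j) (B j) q p s t = prodZ 1 t (\<lambda>l. wgt a b q p (s + int j) (l + (n - int j)))" for j s t
    unfolding Wgt_def wsh by (simp add: algebra_simps)
  have Gnz: "Wgt (A j) (B j) q p s t \<noteq> 0" for j s t
    unfolding Wsh by (rule prodZ_nonzero) (rule wnz)
  have Wmul: "Wgt a b q p (s + int j) (n - int j) * Wgt (A j) (B j) q p s t = Wgt a b q p (s + int j) (n - int j + t)" for j s t
    unfolding Wsh unfolding Wgt_def by (rule prodZ_split) (rule wnz)
  define f where "f = ebinom a b q p"
  define g where "g j = ebinom (A j) (B j) q p" for j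
  have fspec: "espec (Wgt a b q p) f" unfolding f_def by (rule ebinom_espec) (rule Wnz)
  have gspec: "espec (Wgt (A j) (B j) q p) (g j)" for j unfolding g_def by (rule ebinom_espec) (rule Gnz)
  have g0: "g j m' 0 = 1" for j m' using espec_col0[OF gspec] .
  have gz: "g j 0 (int r) = 0" if "r \<ge> 1" for j r
    using espec_zero_above[OF gspec Wgt_zero, of r] that by auto
  define P where "P j K = (\<Prod>i=1..K-j. Wgt a b q p (int i + int j) (n - int j))" for j K :: nat
  define R where "R m' K = (\<Sum>j=0..K. f n (int j) * g j m' (int (K - j)) * P j K)" for m' K
  have Psuc: "P j (Suc k') = P j k' * Wgt a b q p (int (Suc k')) (n - int j)" if "j \<le> k'" for j k'
  proof -
    have "Suc k' - j = Suc (k' - j)" using that by simp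
    moreover have "int (Suc (k' - j)) + int j = int (Suc k')" using that by simp
    ultimately show ?thesis unfolding P_def by (simp add: prod.cl_ivl_Suc)
  qed
  have PKK: "P K K = 1" for K unfolding P_def by simp
  have termeq: "f n (int j) * g j (m' + 1) (int (Suc k' - j)) * P j (Suc k')
      = f n (int j) * g j m' (int (Suc k' - j)) * P j (Suc k')
        + f n (int j) * g j m' (int (k' - j)) * P j k' * Wgt a b q p (int (Suc k')) (n + m' + 1 - int (Suc k'))"
    if "j \<le> k'" for j k' m'
  proof -
    define s where "s = int (Suc k' - j)"
    have s1: "s - 1 = int (k' - j)" "s + int j = int (Suc k')" using that unfolding s_def by auto
    have "(m' + 1, s) \<noteq> (0, 0)" using that unfolding s_def by simp
    then have "g j (m' + 1) s = g j m' s + g j m' (s - 1) * Wgt (A j) (B j) q p s (m' + 1 - s)"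
      using espec_rec[OF gspec] by blast
    then have gr: "g j (m' + 1) s = g j m' s + g j m' (int (k' - j)) * Wgt (A j) (B j) q p s (m' + 1 - s)"
      using s1 by simp
    have wm: "Wgt a b q p (int (Suc k')) (n - int j) * Wgt (A j) (B j) q p s (m' + 1 - s)
        = Wgt a b q p (int (Suc k')) (n + m' + 1 - int (Suc k'))"
    proof -
      have e: "n - int j + (m' + 1 - s) = n + m' + 1 - int (Suc k')" using s1(2) by linarith
      show ?thesis using Wmul[of s j "m' + 1 - s"] unfolding s1(2) e .
    qed
    show ?thesis unfolding s_def[symmetric] gr Psuc[OF that] wm[symmetric]
      by (simp add: algebra_simps)
  qed
  have Rrec: "R (m' + 1) (Suc k') = R m' (Suc k') + R m' k' * Wgt a b q p (int (Suc k')) (n + m' + 1 - int (Suc k'))" for m' k'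
  proof -
    have "R (m' + 1) (Suc k') = (\<Sum>j=0..k'. f n (int j) * g j (m' + 1) (int (Suc k' - j)) * P j (Suc k'))
        + f n (int (Suc k')) * P (Suc k') (Suc k')"
      unfolding R_def by (simp add: g0)
    also have "(\<Sum>j=0..k'. f n (int j) * g j (m' + 1) (int (Suc k' - j)) * P j (Suc k'))
       = (\<Sum>j=0..k'. f n (int j) * g j m' (int (Suc k' - j)) * P j (Suc k'))
         + (\<Sum>j=0..k'. f n (int j) * g j m' (int (k' - j)) * P j k') * Wgt a b q p (int (Suc k')) (n + m' + 1 - int (Suc k'))"
    proof -
      have "(\<Sum>j=0..k'. f n (int j) * g j (m' + 1) (int (Suc k' - j)) * P j (Suc k'))
        = (\<Sum>j=0..k'. f n (int j) * g j m' (int (Suc k' - j)) * P j (Suc k')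
            + f n (int j) * g j m' (int (k' - j)) * P j k' * Wgt a b q p (int (Suc k')) (n + m' + 1 - int (Suc k')))"
        by (intro sum.cong refl, rule termeq, simp)
      then show ?thesis by (simp only: sum.distrib sum_distrib_right)
    qed
    also have "R m' (Suc k') = (\<Sum>j=0..k'. f n (int j) * g j m' (int (Suc k' - j)) * P j (Suc k'))
        + f n (int (Suc k')) * P (Suc k') (Suc k')"
      unfolding R_def by (simp add: g0)
    ultimately show ?thesis unfolding R_def by simp
  qed
  have main: "\<forall>m'. f (n + m') (int K) = R m' K" for K
  proof (induction K)
    case 0
    then show ?case unfolding R_def P_def using espec_col0[OF fspec] g0 by simp
  next
    case (Suc k')
    show ?case
    proof
      fix m'
      show "f (n + m') (int (Suc k')) = R m' (Suc k')"
      proof (induction m' rule: int_shift_induct)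
        case 1
        have "R 0 (Suc k') = (\<Sum>j=0..k'. f n (int j) * g j 0 (int (Suc k' - j)) * P j (Suc k'))
          + f n (int (Suc k')) * g (Suc k') 0 0 * P (Suc k') (Suc k')"
          unfolding R_def by simp
        also have "(\<Sum>j=0..k'. f n (int j) * g j 0 (int (Suc k' - j)) * P j (Suc k')) = 0"
          by (rule sum.neutral) (use gz in \<open>auto simp del: of_nat_diff\<close>)
        finally show ?case using g0 PKK by simp
      next
        case (2 x)
        have "(n + x + 1, int (Suc k')) \<noteq> (0, 0)" by simp
        then have "f (n + x + 1) (int (Suc k')) = f (n + x) (int (Suc k')) + f (n + x) (int k') * Wgt a b q p (int (Suc k')) (n + x + 1 - int (Suc k'))"
          using espec_rec[OF fspec] by fastforce
        then show ?case using Rrec[of x k'] 2 Suc.IH by (simp add: add.assoc)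
      next
        case (3 x)
        have "(n + x + 1, int (Suc k')) \<noteq> (0, 0)" by simp
        then have "f (n + x + 1) (int (Suc k')) = f (n + x) (int (Suc k')) + f (n + x) (int k') * Wgt a b q p (int (Suc k')) (n + x + 1 - int (Suc k'))"
          using espec_rec[OF fspec] by fastforce
        then show ?case using Rrec[of x k'] 3 Suc.IH by (simp add: add.assoc)
      qed
    qed
  qed
  show ?thesis using main[of k] unfolding R_def P_def f_def g_def A_def B_def by simp
qed

end
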